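(* Let $l,l'$ be two nonparallel lines intersecting at a point $O$, and let $X,X'$ be two points lying in the same quadrant divided by $l,l'$. Let $Q(X,X',l,l')$ denote the unique (possibly degenerate) parallelogram that has a pair of opposite corners at $X,X'$ and its other two corners on $l$ and $l'$ respectively. Let $\theta$ denote the angle of the quadrant divided by $l,l'$ that contains $X,X'$. Then \begin{equation*} Area\left(Q(X,X',l,l')\right)=\left| d_l(X)\,d_{l'}(X)-d_l(X')\,d_{l'}(X')\right| / \sin \theta, \end{equation*} where $d_l(Z)$ denotes the distance from a point $Z$ to the line $l$.
   Context: Concretely, $Q(X,X',l,l')$ is constructed as follows: let $M$ be the midpoint of $X$ and $X'$; let $Y$ be the intersection of $l$ with the reflection of $l'$ about $M$, and $Y'$ the intersection of $l'$ with the reflection of $l$ about $M$. Then $Y,Y'$ is the unique pair of points with $Y\in l$, $Y'\in l'$ and midpoint $M$, so $XYX'Y'$ is a parallelogram (possibly degenerate, i.e., with all four corners on one line), and it is the unique such parallelogram with opposite corners $X,X'$ and the other two corners on $l,l'$ respectively. The quantity $d_l(Z)\,d_{l'}(Z)$ is called the distance-product of $Z$ to the lines $l,l'$. *)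

theory Defs
  imports "HOL-Analysis.Analysis"
begin

definition is_line :: "(real^2) set \<Rightarrow> bool" where
  "is_line L \<longleftrightarrow> (\<exists>P v. v \<noteq> 0 \<and> L = {P + t *\<^sub>R v | t. True})"

definition dist_line :: "(real^2) set \<Rightarrow> real^2 \<Rightarrow> real" where
  "dist_line L Z = infdist Z L"

definition quadrant :: "real^2 \<Rightarrow> real^2 \<Rightarrow> real^2 \<Rightarrow> (real^2) set" where
  "quadrant P0 u v = {P0 + a *\<^sub>R u + b *\<^sub>R v | a b. a \<ge> 0 \<and> b \<ge> 0}"

definition vec_angle :: "real^2 \<Rightarrow> real^2 \<Rightarrow> real" where
  "vec_angle u v = arccos ((u \<bullet> v) / (norm u * norm v))"

text \<open>Q(X,X',l,l'): the parallelogram X Y X' Y' with Y on l, Y' on l', and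
  midpoint of Y,Y' equal to the midpoint of X,X' (unique for nonparallel lines).\<close>
definition para_Q :: "real^2 \<Rightarrow> real^2 \<Rightarrow> (real^2) set \<Rightarrow> (real^2) set \<Rightarrow> (real^2) set" where
  "para_Q X X' l l' =
     (let (Y, Y') = (THE p. fst p \<in> l \<and> snd p \<in> l' \<and> midpoint (fst p) (snd p) = midpoint X X')
      in convex hull {X, Y, X', Y'})"

definition area :: "(real^2) set \<Rightarrow> real" where
  "area S = measure lebesgue S"

end

theory Submission
  imports Defs
begin


definition cr :: "real^2 \<Rightarrow> real^2 \<Rightarrow> real" where
  "cr p q = p$1 * q$2 - p$2 * q$1"

lemma inner2: "(p::real^2) \<bullet> q = p$1*q$1 + p$2*q$2"
  by (simp add: inner_vec_def sum_2)

lemma norm2: "(norm (p::real^2))^2 = p$1^2 + p$2^2"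
  unfolding power2_norm_eq_inner inner2 by (simp add: power2_eq_square)

lemma lagr: "(cr p q)^2 + (p \<bullet> q)^2 = (norm p)^2 * (norm q)^2"
proof -
  have "(norm p)^2 * (norm q)^2 = (p$1^2 + p$2^2) * (q$1^2 + q$2^2)" by (simp only: norm2)
  thus ?thesis by (simp add: cr_def inner2 power2_eq_square algebra_simps)
qed

lemma cr_le: "\<bar>cr p q\<bar> \<le> norm p * norm q"
proof -
  have "(cr p q)^2 \<le> (norm p * norm q)^2" using lagr[of p q]
    by (simp add: power_mult_distrib) (smt (verit) zero_le_power2)
  hence "\<bar>cr p q\<bar>^2 \<le> (norm p * norm q)^2" by simp
  thus ?thesis by (rule power2_le_imp_le) simp
qed

lemma line_repr:
  assumes "is_line l" "P0 \<in> l" "P0 + u \<in> l" "u \<noteq> 0"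
  shows "l = {P0 + t *\<^sub>R u | t. True}"
proof -
  obtain P w where w: "w \<noteq> 0" "l = {P + t *\<^sub>R w | t. True}" using assms(1) unfolding is_line_def by blast
  obtain t0 where t0: "P0 = P + t0 *\<^sub>R w" using assms(2) w by auto
  obtain t1 where t1: "P0 + u = P + t1 *\<^sub>R w" using assms(3) w by auto
  have u: "u = (t1 - t0) *\<^sub>R w" using t0 t1 by (simp add: algebra_simps)
  have c: "t1 - t0 \<noteq> 0" using u assms(4) by auto
  show ?thesis
  proof (rule set_eqI, rule iffI)
    fix x assume "x \<in> l"
    then obtain t where "x = P + t *\<^sub>R w" using w by auto
    have "(t - t0) *\<^sub>R w = ((t - t0)/(t1-t0)) *\<^sub>R ((t1 - t0) *\<^sub>R w)" using c by simp
    hence "x = P0 + ((t - t0)/(t1-t0)) *\<^sub>R u" using \<open>x = P + t *\<^sub>R w\<close> by (simp add: u t0 algebra_simps)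
    thus "x \<in> {P0 + t *\<^sub>R u | t. True}" by blast
  next
    fix x assume "x \<in> {P0 + t *\<^sub>R u | t. True}"
    then obtain s where "x = P0 + s *\<^sub>R u" by auto
    hence "x = P + (t0 + s*(t1-t0)) *\<^sub>R w" by (simp add: u t0 algebra_simps)
    thus "x \<in> l" using w by blast
  qed
qed

lemma infdist_line:
  assumes "u \<noteq> 0"
  shows "infdist Z {P0 + t *\<^sub>R u | t. True} = \<bar>cr (Z - P0) u\<bar> / norm u"
proof -
  let ?L = "{P0 + t *\<^sub>R u | t. True}"
  define w where "w = Z - P0"
  have nu: "norm u > 0" using assms by simp
  have lb: "\<bar>cr w u\<bar> / norm u \<le> dist Z y" if yL: "y \<in> ?L" for y
  proof -
    obtain t where y: "y = P0 + t *\<^sub>R u" using yL by auto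
    have "cr w u = cr (w - t *\<^sub>R u) u" by (simp add: cr_def algebra_simps)
    also have "\<bar>\<dots>\<bar> \<le> norm (w - t *\<^sub>R u) * norm u" by (rule cr_le)
    also have "norm (w - t *\<^sub>R u) = dist Z y" by (simp add: y w_def dist_norm algebra_simps)
    finally show ?thesis using nu by (simp add: divide_le_eq)
  qed
  define t where "t = (w \<bullet> u) / (norm u)^2"
  have e: "Z - (P0 + t *\<^sub>R u) = w - t *\<^sub>R u" by (simp add: w_def)
  have "(dist Z (P0 + t *\<^sub>R u))^2 = (w - t *\<^sub>R u) \<bullet> (w - t *\<^sub>R u)"
    unfolding dist_norm e power2_norm_eq_inner ..
  also have "\<dots> = w \<bullet> w - 2*t*(w \<bullet> u) + t^2 * (u \<bullet> u)"
    by (simp add: inner_diff_left inner_diff_right algebra_simps power2_eq_square inner_commute)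
  also have "\<dots> = (norm w)^2 - 2*t*(w \<bullet> u) + t^2 * (norm u)^2" by (simp add: power2_norm_eq_inner)
  also have "\<dots> = (norm w)^2 - (w \<bullet> u)^2 / (norm u)^2" using nu
    by (simp add: t_def field_simps power2_eq_square)
  also have "\<dots> = (cr w u)^2 / (norm u)^2" using lagr[of w u] nu by (simp add: field_simps)
  also have "\<dots> = (\<bar>cr w u\<bar> / norm u)^2" by (simp add: power_divide)
  finally have "dist Z (P0 + t *\<^sub>R u) = \<bar>cr w u\<bar> / norm u"
    by (metis abs_of_nonneg divide_nonneg_nonneg norm_ge_zero abs_ge_zero real_sqrt_abs zero_le_dist)
  hence up: "infdist Z ?L \<le> \<bar>cr w u\<bar> / norm u" by (metis (mono_tags, lifting) infdist_le mem_Collect_eq)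
  have "\<bar>cr w u\<bar> / norm u \<le> infdist Z ?L"
  proof -
    have ne: "?L \<noteq> {}" by blast
    show ?thesis unfolding infdist_notempty[OF ne]
      by (rule cINF_greatest[OF ne]) (rule lb)
  qed
  with up show ?thesis by (simp add: w_def)
qed

lemma sin_ang:
  assumes "u \<noteq> 0" "v \<noteq> 0"
  shows "sin (vec_angle u v) = \<bar>cr u v\<bar> / (norm u * norm v)"
proof -
  let ?c = "(u \<bullet> v) / (norm u * norm v)"
  have p: "norm u * norm v > 0" using assms by simp
  have "\<bar>u \<bullet> v\<bar> \<le> norm u * norm v" by (rule Cauchy_Schwarz_ineq2)
  hence c: "-1 \<le> ?c" "?c \<le> 1" using p by (auto simp: divide_le_eq le_divide_eq abs_le_iff)
  have "1 - ?c^2 = ((norm u * norm v)^2 - (u \<bullet> v)^2) / (norm u * norm v)^2" using p assms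
    by (simp add: power_divide diff_divide_distrib del: divide_eq_0_iff)
  also have "\<dots> = (cr u v)^2 / (norm u * norm v)^2" using lagr[of u v]
    by (simp add: power_mult_distrib)
  also have "\<dots> = (\<bar>cr u v\<bar> / (norm u * norm v))^2" by (simp add: power_divide)
  finally show ?thesis unfolding vec_angle_def sin_arccos[OF c] using p by simp
qed


lemma indep:
  assumes "cr u v \<noteq> 0" "s *\<^sub>R u + t *\<^sub>R v = 0"
  shows "s = 0 \<and> t = 0"
proof -
  have e1: "s * u$1 + t * v$1 = 0" and e2: "s * u$2 + t * v$2 = 0"
    using assms(2) by (auto simp: vec_eq_iff forall_2)
  have a1: "s * u$1 = - (t * v$1)" and a2: "s * u$2 = - (t * v$2)" using e1 e2 by linarith+
  have s0: "s * cr u v = 0"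
  proof -
    have "s * cr u v = (s * u$1) * v$2 - (s * u$2) * v$1" by (simp add: cr_def algebra_simps)
    also have "\<dots> = 0" unfolding a1 a2 by simp
    finally show ?thesis .
  qed
  have b1: "t * v$1 = - (s * u$1)" and b2: "t * v$2 = - (s * u$2)" using e1 e2 by linarith+
  have t0: "t * cr u v = 0"
  proof -
    have "t * cr u v = u$1 * (t * v$2) - u$2 * (t * v$1)" by (simp add: cr_def algebra_simps)
    also have "\<dots> = 0" unfolding b1 b2 by simp
    finally show ?thesis .
  qed
  from s0 t0 assms(1) show ?thesis by simp
qed

lemma cr_zero_par:
  assumes "cr u v = 0" "u \<noteq> 0"
  shows "\<exists>c. v = c *\<^sub>R u"
proof (cases "u$1 = 0")
  case False
  have "v = (v$1/u$1) *\<^sub>R u" using assms False unfolding cr_def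
    by (auto simp: vec_eq_iff forall_2 field_simps)
  thus ?thesis by blast
next
  case True
  hence "u$2 \<noteq> 0" using assms(2) by (auto simp: vec_eq_iff forall_2)
  hence "v = (v$2/u$2) *\<^sub>R u" using assms True unfolding cr_def
    by (auto simp: vec_eq_iff forall_2 field_simps)
  thus ?thesis by blast
qed

lemma meas_unit: "measure lebesgue (cbox (0::real^2) One) = 1"
  by (simp add: content_cbox_if)



lemma area_par:
  fixes X Y Y' :: "real^2"
  shows "measure lebesgue (convex hull {X, Y, Y + Y' - X, Y'}) = \<bar>cr (Y - X) (Y' - X)\<bar>"
proof -
  define A where "A = Y - X"
  define B where "B = Y' - X"
  define f where "f = (\<lambda>p::real^2. p$1 *\<^sub>R A + p$2 *\<^sub>R B)"
  define V where "V = {x::real^2. \<forall>i\<in>Basis. x \<bullet> i = 0 \<or> x \<bullet> i = 1}"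
  have lin: "linear f" unfolding f_def by (rule linearI) (simp_all add: algebra_simps)
  have img: "(\<lambda>x. X + x) ` (f ` V) = {X, Y, Y + Y' - X, Y'}"
  proof
    show "(\<lambda>x. X + x) ` (f ` V) \<subseteq> {X, Y, Y + Y' - X, Y'}"
    proof
      fix z assume "z \<in> (\<lambda>x. X + x) ` (f ` V)"
      then obtain p where p: "p \<in> V" "z = X + f p" by auto
      have "p$1 = 0 \<or> p$1 = 1" "p$2 = 0 \<or> p$2 = 1" using p(1) unfolding V_def
        by (auto simp: cart_eq_inner_axis axis_in_Basis_iff)
      thus "z \<in> {X, Y, Y + Y' - X, Y'}" using p(2) unfolding f_def A_def B_def by auto
    qed
  next
    have mem: "vector [a, b] \<in> V" if "a = 0 \<or> a = 1" "b = 0 \<or> b = 1" for a b :: real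
      unfolding V_def using that by (auto simp: Basis_vec_def inner_axis forall_2)
    have "X = X + f (vector [0,0])" "Y = X + f (vector [1,0])" "Y + Y' - X = X + f (vector [1,1])"
      "Y' = X + f (vector [0,1])" unfolding f_def A_def B_def by (simp_all add: algebra_simps)
    thus "{X, Y, Y + Y' - X, Y'} \<subseteq> (\<lambda>x. X + x) ` (f ` V)"
      using mem by (metis (no_types, lifting) empty_subsetI image_eqI insert_subset zero_neq_one)
  qed
  have ch: "convex hull {X, Y, Y + Y' - X, Y'} = (+) X ` (f ` cbox 0 One)"
    unfolding img[symmetric] convex_hull_translation convex_hull_linear_image[OF lin, symmetric]
      V_def unit_interval_convex_hull[symmetric] by (simp add: comp_def)
  have ax1: "f (axis 1 1) = A" and ax2: "f (axis 2 1) = B" unfolding f_def by (simp_all add: axis_def)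
  have det: "det (matrix f) = cr A B"
    by (simp add: det_2 matrix_def ax1 ax2 cr_def)
  have "measure lebesgue (convex hull {X, Y, Y + Y' - X, Y'}) = measure lebesgue (f ` cbox 0 One)"
    unfolding ch measure_translation ..
  also have "\<dots> = \<bar>cr A B\<bar>" using measure_linear_image[OF lin, of "cbox 0 One"] det meas_unit by simp
  finally show ?thesis by (simp add: A_def B_def)
qed



lemma cr_lin: "cr (a *\<^sub>R u + b *\<^sub>R v) (c *\<^sub>R u + d *\<^sub>R v) = (a*d - b*c) * cr u v"
  by (simp add: cr_def algebra_simps)

theorem lemma9:
  fixes l l' :: "(real^2) set" and P0 X X' u v :: "real^2"
  assumes "is_line l" and "is_line l'" and "l \<inter> l' = {P0}"
    and "u \<noteq> 0" and "P0 + u \<in> l" and "v \<noteq> 0" and "P0 + v \<in> l'"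
    and "X \<in> quadrant P0 u v" and "X' \<in> quadrant P0 u v"
  shows "area (para_Q X X' l l') =
    \<bar>dist_line l X * dist_line l' X - dist_line l X' * dist_line l' X'\<bar> / sin (vec_angle u v)"
proof -
  have P0l: "P0 \<in> l" "P0 \<in> l'" using assms(3) by auto
  have L: "l = {P0 + t *\<^sub>R u | t. True}" using line_repr[OF assms(1) P0l(1) assms(5) assms(4)] .
  have L': "l' = {P0 + t *\<^sub>R v | t. True}" using line_repr[OF assms(2) P0l(2) assms(7) assms(6)] .
  have crnz: "cr u v \<noteq> 0"
  proof
    assume "cr u v = 0"
    then obtain c where c: "v = c *\<^sub>R u" using cr_zero_par assms(4) by blast
    have "P0 + v \<in> l" unfolding L c by blast
    hence "P0 + v \<in> {P0}" using assms(3,7) by blast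
    thus False using assms(6) by simp
  qed
  obtain a b where ab: "a \<ge> 0" "b \<ge> 0" "X = P0 + a *\<^sub>R u + b *\<^sub>R v"
    using assms(8) unfolding quadrant_def by blast
  obtain a' b' where ab': "a' \<ge> 0" "b' \<ge> 0" "X' = P0 + a' *\<^sub>R u + b' *\<^sub>R v"
    using assms(9) unfolding quadrant_def by blast
  define Y where "Y = P0 + (a + a') *\<^sub>R u"
  define Y' where "Y' = P0 + (b + b') *\<^sub>R v"
  have sumXX: "X + X' = 2 *\<^sub>R P0 + (a + a') *\<^sub>R u + (b + b') *\<^sub>R v"
    unfolding ab(3) ab'(3) by (simp add: algebra_simps scaleR_2)
  have THE: "(THE p. fst p \<in> l \<and> snd p \<in> l' \<and> midpoint (fst p) (snd p) = midpoint X X') = (Y, Y')"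
  proof (rule the_equality)
    show "fst (Y, Y') \<in> l \<and> snd (Y, Y') \<in> l' \<and> midpoint (fst (Y, Y')) (snd (Y, Y')) = midpoint X X'"
    proof (intro conjI)
      show "fst (Y, Y') \<in> l" unfolding L Y_def by auto
      show "snd (Y, Y') \<in> l'" unfolding L' Y'_def by auto
      have "Y + Y' = X + X'" unfolding sumXX Y_def Y'_def by (simp add: algebra_simps scaleR_2)
      thus "midpoint (fst (Y, Y')) (snd (Y, Y')) = midpoint X X'" by (simp add: midpoint_def)
    qed
  next
    fix p assume p: "fst p \<in> l \<and> snd p \<in> l' \<and> midpoint (fst p) (snd p) = midpoint X X'"
    obtain s where s: "fst p = P0 + s *\<^sub>R u" using p L by auto
    obtain t where t: "snd p = P0 + t *\<^sub>R v" using p L' by auto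
    have "fst p + snd p = X + X'" using p unfolding midpoint_def by simp
    hence z: "(s - (a + a')) *\<^sub>R u + (t - (b + b')) *\<^sub>R v = 0"
      unfolding s t sumXX by (simp add: algebra_simps scaleR_2)
    have "s = a + a' \<and> t = b + b'" using indep[OF crnz z] by simp
    then show "p = (Y, Y')" using s t by (simp add: prod_eq_iff Y_def Y'_def)
  qed
  have X'eq: "X' = Y + Y' - X" unfolding Y_def Y'_def ab(3) ab'(3) by (simp add: algebra_simps)
  have "area (para_Q X X' l l') = measure lebesgue (convex hull {X, Y, Y + Y' - X, Y'})"
    unfolding para_Q_def area_def THE by (simp add: X'eq)
  also have "\<dots> = \<bar>cr (Y - X) (Y' - X)\<bar>" by (rule area_par)
  also have "cr (Y - X) (Y' - X) = cr (a' *\<^sub>R u + (- b) *\<^sub>R v) ((- a) *\<^sub>R u + b' *\<^sub>R v)"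
    unfolding Y_def Y'_def ab(3) by (simp add: algebra_simps)
  also have "\<dots> = (a'*b' - a*b) * cr u v" by (simp add: cr_def algebra_simps)
  finally have lhs: "area (para_Q X X' l l') = \<bar>a*b - a'*b'\<bar> * \<bar>cr u v\<bar>"
    by (simp add: abs_mult abs_minus_commute)
  define k where "k = \<bar>cr u v\<bar>"
  have k: "k > 0" using crnz k_def by simp
  have nu: "norm u > 0" and nv: "norm v > 0" using assms(4,6) by auto
  have d1: "dist_line l Z = \<bar>cr (Z - P0) u\<bar> / norm u" for Z
    unfolding dist_line_def L using infdist_line[OF assms(4)] .
  have d2: "dist_line l' Z = \<bar>cr (Z - P0) v\<bar> / norm v" for Z
    unfolding dist_line_def L' using infdist_line[OF assms(6)] .
  have c1: "\<bar>cr (P0 + a *\<^sub>R u + b *\<^sub>R v - P0) u\<bar> = b * k" if "b \<ge> 0" for a b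
  proof -
    have "cr (P0 + a *\<^sub>R u + b *\<^sub>R v - P0) u = cr (a *\<^sub>R u + b *\<^sub>R v) (1 *\<^sub>R u + 0 *\<^sub>R v)" by simp
    also have "\<dots> = - b * cr u v" by (simp only: cr_lin) simp
    finally show ?thesis using that by (simp add: abs_mult k_def)
  qed
  have c2: "\<bar>cr (P0 + a *\<^sub>R u + b *\<^sub>R v - P0) v\<bar> = a * k" if "a \<ge> 0" for a b
  proof -
    have "cr (P0 + a *\<^sub>R u + b *\<^sub>R v - P0) v = cr (a *\<^sub>R u + b *\<^sub>R v) (0 *\<^sub>R u + 1 *\<^sub>R v)" by simp
    also have "\<dots> = a * cr u v" by (simp only: cr_lin) simp
    finally show ?thesis using that by (simp add: abs_mult k_def)
  qed
  have e1: "dist_line l X = b * k / norm u" unfolding d1 ab(3) c1[OF ab(2)] ..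
  have e2: "dist_line l' X = a * k / norm v" unfolding d2 ab(3) c2[OF ab(1)] ..
  have e3: "dist_line l X' = b' * k / norm u" unfolding d1 ab'(3) c1[OF ab'(2)] ..
  have e4: "dist_line l' X' = a' * k / norm v" unfolding d2 ab'(3) c2[OF ab'(1)] ..
  have sn: "sin (vec_angle u v) = k / (norm u * norm v)" unfolding sin_ang[OF assms(4,6)] k_def ..
  define m where "m = k * k / (norm u * norm v)"
  have m: "m > 0" unfolding m_def using k nu nv by simp
  have "b * k / norm u * (a * k / norm v) - b' * k / norm u * (a' * k / norm v) = (a*b - a'*b') * m"
    unfolding m_def using nu nv by (simp add: field_simps)
  hence "\<bar>dist_line l X * dist_line l' X - dist_line l X' * dist_line l' X'\<bar> / sin (vec_angle u v)
      = \<bar>a*b - a'*b'\<bar> * m / (k / (norm u * norm v))"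
    unfolding e1 e2 e3 e4 sn using m by (simp add: abs_mult)
  also have "\<dots> = \<bar>a*b - a'*b'\<bar> * k" unfolding m_def using k nu nv by (simp add: field_simps)
  finally show ?thesis using lhs k_def by simp
qed

end
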